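(* Let $\mathcal{M}=(S,A,\delta)$ be a finite fuzzy transition system and $\gamma\in(0,1)$. For any functions $d,d':S\times S\to[0,1]$, \[\|\Delta(d)-\Delta(d')\|\le\gamma\cdot\|d-d'\|,\] where $\|e\|=\max_{s,t\in S}|e(s,t)|$.
   Context: A fuzzy set on a finite set $X$ is a map $\mu:X\to[0,1]$; $\mathcal{F}(X)$ is the set of fuzzy sets on $X$; $\mu(U)=\max_{x\in U}\mu(x)$. A fuzzy transition system is $\mathcal{M}=(S,A,\delta)$ with $S,A$ finite and $\delta:S\times A\to\mathcal{P}(\mathcal{F}(S))$, each $\delta(s,a)$ finite. For $d:S\times S\to[0,1]$, the lifting is: $\hat d(\mu,\eta)=1$ if $\mu(S)\ne\eta(S)$, and otherwise $\hat d(\mu,\eta)$ is the minimum of $\max_{u,v}\min(d(u,v),x_{uv})$ over $x_{uv}\ge0$ with $\max_v x_{uv}=\mu(u)$ for all $u$ and $\max_u x_{uv}=\eta(v)$ for all $v$. For finite $Z\subseteq\mathcal{F}(S)$: $\hat d(\mu,Z)=\min_{\eta\in Z}\hat d(\mu,\eta)$ if $Z\ne\emptyset$, else $1$. Hausdorff distance: $H_{\hat d}(\emptyset,\emptyset)=0$, otherwise $H_{\hat d}(Y,Z)=\max(\max_{\mu\in Y}\hat d(\mu,Z),\max_{\eta\in Z}\hat d(\eta,Y))$. With discounting factor $\gamma$, $\Delta(d)(s,t)=\gamma\cdot\max_{a\in A}H_{\hat d}(\delta(s,a),\delta(t,a))$. *)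

theory Defs
  imports Complex_Main
begin

definition fuzzy_set :: "('s \<Rightarrow> real) \<Rightarrow> bool" where
  "fuzzy_set \<mu> \<longleftrightarrow> (\<forall>x. 0 \<le> \<mu> x \<and> \<mu> x \<le> 1)"

definition fmax :: "('s::finite \<Rightarrow> real) \<Rightarrow> real" where
  "fmax \<mu> = Max (range \<mu>)"

definition coupling :: "('s::finite \<Rightarrow> real) \<Rightarrow> ('s \<Rightarrow> real) \<Rightarrow> ('s \<Rightarrow> 's \<Rightarrow> real) \<Rightarrow> bool" where
  "coupling \<mu> \<eta> x \<longleftrightarrow> (\<forall>u v. 0 \<le> x u v)
     \<and> (\<forall>u. Max (range (\<lambda>v. x u v)) = \<mu> u)
     \<and> (\<forall>v. Max (range (\<lambda>u. x u v)) = \<eta> v)"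

text \<open>Lifting of d to fuzzy sets; the minimum is written as an infimum
  (it is attained by compactness).\<close>
definition lift :: "('s::finite \<Rightarrow> 's \<Rightarrow> real) \<Rightarrow> ('s \<Rightarrow> real) \<Rightarrow> ('s \<Rightarrow> real) \<Rightarrow> real" where
  "lift d \<mu> \<eta> = (if fmax \<mu> \<noteq> fmax \<eta> then 1
     else Inf {Max (range (\<lambda>(u,v). min (d u v) (x u v))) | x. coupling \<mu> \<eta> x})"

definition lift_set :: "('s::finite \<Rightarrow> 's \<Rightarrow> real) \<Rightarrow> ('s \<Rightarrow> real) \<Rightarrow> ('s \<Rightarrow> real) set \<Rightarrow> real" where
  "lift_set d \<mu> Z = (if Z = {} then 1 else Min ((\<lambda>\<eta>. lift d \<mu> \<eta>) ` Z))"

definition maxset :: "real set \<Rightarrow> real" where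
  "maxset A = (if A = {} then 0 else Max A)"

definition hausdorff :: "('s::finite \<Rightarrow> 's \<Rightarrow> real) \<Rightarrow> ('s \<Rightarrow> real) set \<Rightarrow> ('s \<Rightarrow> real) set \<Rightarrow> real" where
  "hausdorff d Y Z = (if Y = {} \<and> Z = {} then 0
     else max (maxset ((\<lambda>\<mu>. lift_set d \<mu> Z) ` Y)) (maxset ((\<lambda>\<eta>. lift_set d \<eta> Y) ` Z)))"

definition Delta :: "real \<Rightarrow> ('s::finite \<Rightarrow> 'a::finite \<Rightarrow> ('s \<Rightarrow> real) set)
    \<Rightarrow> ('s \<Rightarrow> 's \<Rightarrow> real) \<Rightarrow> 's \<Rightarrow> 's \<Rightarrow> real" where
  "Delta \<gamma> \<delta> d s t = \<gamma> * Max (range (\<lambda>a. hausdorff d (\<delta> s a) (\<delta> t a)))"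

definition supnorm :: "('s::finite \<Rightarrow> 's \<Rightarrow> real) \<Rightarrow> real" where
  "supnorm e = Max (range (\<lambda>(s,t). \<bar>e s t\<bar>))"

end

theory Submission
  imports Defs
begin

lemma Max_lip:
  assumes "finite A" "A \<noteq> {}" "\<And>x. x \<in> A \<Longrightarrow> \<bar>f x - g x\<bar> \<le> (c::real)"
  shows "\<bar>Max (f ` A) - Max (g ` A)\<bar> \<le> c"
proof -
  obtain a where a: "a \<in> A" "Max (f ` A) = f a"
    using assms by (metis (mono_tags, lifting) Max_in finite_imageI image_iff image_is_empty)
  obtain b where b: "b \<in> A" "Max (g ` A) = g b"
    using assms by (metis (mono_tags, lifting) Max_in finite_imageI image_iff image_is_empty)
  have "f b \<le> f a" using a b assms by (metis Max_ge finite_imageI imageI)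
  moreover have "g a \<le> g b" proof - have "g a \<le> Max (g ` A)" using a(1) assms(1) by simp then show ?thesis using b by simp qed
  moreover have "\<bar>f a - g a\<bar> \<le> c" "\<bar>f b - g b\<bar> \<le> c" using a b assms by auto
  ultimately show ?thesis using a b by linarith
qed

lemma Min_lip:
  assumes "finite A" "A \<noteq> {}" "\<And>x. x \<in> A \<Longrightarrow> \<bar>f x - g x\<bar> \<le> (c::real)"
  shows "\<bar>Min (f ` A) - Min (g ` A)\<bar> \<le> c"
proof -
  obtain a where a: "a \<in> A" "Min (f ` A) = f a"
    using assms by (metis (mono_tags, lifting) Min_in finite_imageI image_iff image_is_empty)
  obtain b where b: "b \<in> A" "Min (g ` A) = g b"
    using assms by (metis (mono_tags, lifting) Min_in finite_imageI image_iff image_is_empty)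
  have "f a \<le> f b" using a b assms by (metis Min_le finite_imageI imageI)
  moreover have "g b \<le> g a" proof - have "Min (g ` A) \<le> g a" using a(1) assms(1) by simp then show ?thesis using b by simp qed
  moreover have "\<bar>f a - g a\<bar> \<le> c" "\<bar>f b - g b\<bar> \<le> c" using a b assms by auto
  ultimately show ?thesis using a b by linarith
qed

lemma Inf_lip1:
  assumes "S \<noteq> {}" "\<And>x. x \<in> S \<Longrightarrow> f x \<le> g x + (c::real)" "\<And>x. x \<in> S \<Longrightarrow> 0 \<le> f x"
  shows "Inf (f ` S) \<le> Inf (g ` S) + c"
proof -
  have bf: "bdd_below (f ` S)" using assms(3) by (metis bdd_belowI2)
  have "Inf (f ` S) - c \<le> Inf (g ` S)"
  proof (rule cInf_greatest)
    show "g ` S \<noteq> {}" using assms by auto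
    fix y assume "y \<in> g ` S"
    then obtain x where x: "x \<in> S" "y = g x" by auto
    have "Inf (f ` S) \<le> f x" using bf x by (auto intro: cInf_lower)
    then show "Inf (f ` S) - c \<le> y" using assms(2)[OF x(1)] x by simp
  qed
  then show ?thesis by simp
qed

lemma Inf_lip:
  assumes "\<And>x. x \<in> S \<Longrightarrow> \<bar>f x - g x\<bar> \<le> (c::real)" "\<And>x. x \<in> S \<Longrightarrow> 0 \<le> f x"
    "\<And>x. x \<in> S \<Longrightarrow> 0 \<le> g x" "0 \<le> c"
  shows "\<bar>Inf (f ` S) - Inf (g ` S)\<bar> \<le> c"
proof (cases "S = {}")
  case True then show ?thesis using assms by simp
next
  case False
  have "Inf (f ` S) \<le> Inf (g ` S) + c"
    using Inf_lip1[OF False, of f g c] assms by (smt (verit))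
  moreover have "Inf (g ` S) \<le> Inf (f ` S) + c"
    using Inf_lip1[OF False, of g f c] assms by (smt (verit))
  ultimately show ?thesis by linarith
qed

lemma supnorm_ge:
  "\<bar>e s t\<bar> \<le> supnorm (e::'s::finite \<Rightarrow> 's \<Rightarrow> real)"
  unfolding supnorm_def by (rule Max_ge) auto

lemma supnorm_nonneg: "0 \<le> supnorm (e::'s::finite \<Rightarrow> 's \<Rightarrow> real)"
  using supnorm_ge[of e] by (meson abs_ge_zero order_trans)

lemma lift_lip:
  fixes d d' :: "'s::finite \<Rightarrow> 's \<Rightarrow> real"
  assumes "\<And>s t. 0 \<le> d s t" "\<And>s t. 0 \<le> d' s t"
  shows "\<bar>lift d \<mu> \<eta> - lift d' \<mu> \<eta>\<bar> \<le> supnorm (\<lambda>s t. d s t - d' s t)"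
proof (cases "fmax \<mu> \<noteq> fmax \<eta>")
  case True then show ?thesis by (simp add: lift_def supnorm_nonneg)
next
  case False
  let ?c = "supnorm (\<lambda>s t. d s t - d' s t)"
  let ?S = "{x. coupling \<mu> \<eta> x}"
  let ?f = "\<lambda>x. Max (range (\<lambda>(u,v). min (d u v) (x u v)))"
  let ?g = "\<lambda>x. Max (range (\<lambda>(u,v). min (d' u v) (x u v)))"
  have e1: "{?f x | x. coupling \<mu> \<eta> x} = ?f ` ?S" by auto
  have e2: "{?g x | x. coupling \<mu> \<eta> x} = ?g ` ?S" by auto
  have nn: "0 \<le> Max (range (\<lambda>(u,v). min (dd u v) (x u v)))"
    if "x \<in> ?S" "\<And>s t. 0 \<le> dd s t" for x dd
  proof -
    obtain u v :: 's where True by simp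
    have "min (dd u v) (x u v) \<le> Max (range (\<lambda>(u,v). min (dd u v) (x u v)))"
      by (rule Max_ge) (auto intro: image_eqI[of _ _ "(u,v)"])
    moreover have "0 \<le> min (dd u v) (x u v)" using that by (auto simp: coupling_def)
    ultimately show ?thesis by linarith
  qed
  have "\<bar>Inf (?f ` ?S) - Inf (?g ` ?S)\<bar> \<le> ?c"
  proof (rule Inf_lip)
    fix x assume "x \<in> ?S"
    show "\<bar>?f x - ?g x\<bar> \<le> ?c"
    proof -
      have "\<bar>Max ((\<lambda>(u,v). min (d u v) (x u v)) ` UNIV) - Max ((\<lambda>(u,v). min (d' u v) (x u v)) ` UNIV)\<bar> \<le> ?c"
      proof (rule Max_lip)
        fix p :: "'s \<times> 's"
        obtain u v where p: "p = (u,v)" by (cases p)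
        have "\<bar>d u v - d' u v\<bar> \<le> ?c" using supnorm_ge[of "\<lambda>s t. d s t - d' s t" u v] by simp
        then show "\<bar>(case p of (u,v) \<Rightarrow> min (d u v) (x u v)) - (case p of (u,v) \<Rightarrow> min (d' u v) (x u v))\<bar> \<le> ?c"
          using p by (simp add: min_def) linarith
      qed auto
      then show ?thesis by simp
    qed
  next
    fix x assume "x \<in> ?S" then show "0 \<le> ?f x" using nn assms by blast
  next
    fix x assume "x \<in> ?S" then show "0 \<le> ?g x" using nn assms by blast
  qed (rule supnorm_nonneg)
  then show ?thesis using False unfolding lift_def e1 e2 by simp
qed

lemma lift_set_lip:
  fixes d d' :: "'s::finite \<Rightarrow> 's \<Rightarrow> real"
  assumes "\<And>s t. 0 \<le> d s t" "\<And>s t. 0 \<le> d' s t" "finite Z"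
  shows "\<bar>lift_set d \<mu> Z - lift_set d' \<mu> Z\<bar> \<le> supnorm (\<lambda>s t. d s t - d' s t)"
  unfolding lift_set_def using lift_lip[OF assms(1,2)] assms(3)
  by (auto intro!: Min_lip simp: supnorm_nonneg)

lemma maxset_lip:
  assumes "finite A" "\<And>x. x \<in> A \<Longrightarrow> \<bar>f x - g x\<bar> \<le> (c::real)" "0 \<le> c"
  shows "\<bar>maxset (f ` A) - maxset (g ` A)\<bar> \<le> c"
  unfolding maxset_def using assms by (auto intro!: Max_lip)

lemma haus_lip:
  fixes d d' :: "'s::finite \<Rightarrow> 's \<Rightarrow> real"
  assumes "\<And>s t. 0 \<le> d s t" "\<And>s t. 0 \<le> d' s t" "finite Y" "finite Z"
  shows "\<bar>hausdorff d Y Z - hausdorff d' Y Z\<bar> \<le> supnorm (\<lambda>s t. d s t - d' s t)"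
proof -
  let ?c = "supnorm (\<lambda>s t. d s t - d' s t)"
  have 1: "\<bar>maxset ((\<lambda>\<mu>. lift_set d \<mu> Z) ` Y) - maxset ((\<lambda>\<mu>. lift_set d' \<mu> Z) ` Y)\<bar> \<le> ?c"
    by (rule maxset_lip) (use assms supnorm_nonneg in \<open>auto intro!: lift_set_lip\<close>)
  have 2: "\<bar>maxset ((\<lambda>\<mu>. lift_set d \<mu> Y) ` Z) - maxset ((\<lambda>\<mu>. lift_set d' \<mu> Y) ` Z)\<bar> \<le> ?c"
    by (rule maxset_lip) (use assms supnorm_nonneg in \<open>auto intro!: lift_set_lip\<close>)
  show ?thesis unfolding hausdorff_def using 1 2 supnorm_nonneg[of "\<lambda>s t. d s t - d' s t"]
    by (simp add: max_def) linarith
qed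

theorem lemma6:
  fixes \<delta> :: "'s::finite \<Rightarrow> 'a::finite \<Rightarrow> ('s \<Rightarrow> real) set"
    and \<gamma> :: real and d d' :: "'s \<Rightarrow> 's \<Rightarrow> real"
  assumes "\<And>s a. finite (\<delta> s a)"
    and "\<And>s a \<mu>. \<mu> \<in> \<delta> s a \<Longrightarrow> fuzzy_set \<mu>"
    and "0 < \<gamma>" and "\<gamma> < 1"
    and "\<And>s t. 0 \<le> d s t \<and> d s t \<le> 1"
    and "\<And>s t. 0 \<le> d' s t \<and> d' s t \<le> 1"
  shows "supnorm (\<lambda>s t. Delta \<gamma> \<delta> d s t - Delta \<gamma> \<delta> d' s t)
           \<le> \<gamma> * supnorm (\<lambda>s t. d s t - d' s t)"
proof -
  let ?c = "supnorm (\<lambda>s t. d s t - d' s t)"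
  have st: "\<bar>Delta \<gamma> \<delta> d s t - Delta \<gamma> \<delta> d' s t\<bar> \<le> \<gamma> * ?c" for s t
  proof -
    have "\<bar>Max ((\<lambda>a. hausdorff d (\<delta> s a) (\<delta> t a)) ` UNIV) - Max ((\<lambda>a. hausdorff d' (\<delta> s a) (\<delta> t a)) ` UNIV)\<bar> \<le> ?c"
      by (rule Max_lip) (use assms in \<open>auto intro!: haus_lip\<close>)
    then have "\<gamma> * \<bar>Max (range (\<lambda>a. hausdorff d (\<delta> s a) (\<delta> t a))) - Max (range (\<lambda>a. hausdorff d' (\<delta> s a) (\<delta> t a)))\<bar> \<le> \<gamma> * ?c"
      using assms(3) by (simp add: mult_left_mono)
    then show ?thesis unfolding Delta_def using assms(3)
      by (simp add: abs_mult right_diff_distrib[symmetric])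
  qed
  show ?thesis unfolding supnorm_def[of "\<lambda>s t. Delta \<gamma> \<delta> d s t - Delta \<gamma> \<delta> d' s t"]
    using st by (auto intro!: Max.boundedI)
qed

end
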